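(* Let $G$ be a compact group with Haar probability measure $dg$, acting linearly and continuously (i.e. via a continuous homomorphism $G\to GL(V)$) on a finite-dimensional real vector space $V$. Fix a vector $v\in V$ and a linear function $\ell:V\to\mathbb{R}$, and define $f:G\to\mathbb{R}$ by $f(g)=\ell(gv)$. Then $$\|f\|_2\le \|f\|_\infty\le \sqrt{\dim V}\,\|f\|_2 .$$
   Context: For a function $f:G\to\mathbb{R}$, $\|f\|_\infty=\max_{g\in G}|f(g)|$ and, for a positive integer $k$, $\|f\|_{2k}=\left(\int_G f^{2k}(g)\,dg\right)^{1/(2k)}$. *)

theory Defs
  imports "HOL-Analysis.Analysis" "HOL-Probability.Probability"
begin

definition compact_group ::
  "('g::t2_space \<Rightarrow> 'g \<Rightarrow> 'g) \<Rightarrow> ('g \<Rightarrow> 'g) \<Rightarrow> 'g \<Rightarrow> bool" where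
  "compact_group mul iv e \<longleftrightarrow>
     (\<forall>x y z. mul (mul x y) z = mul x (mul y z)) \<and>
     (\<forall>x. mul e x = x \<and> mul x e = x) \<and>
     (\<forall>x. mul (iv x) x = e \<and> mul x (iv x) = e) \<and>
     continuous_on UNIV (\<lambda>p. mul (fst p) (snd p)) \<and>
     continuous_on UNIV iv \<and>
     compact (UNIV :: 'g set)"

definition haar_probability ::
  "('g::t2_space \<Rightarrow> 'g \<Rightarrow> 'g) \<Rightarrow> 'g measure \<Rightarrow> bool" where
  "haar_probability mul M \<longleftrightarrow>
     prob_space M \<and> sets M = sets borel \<and>
     (\<forall>h A. A \<in> sets borel \<longrightarrow> emeasure M ((\<lambda>g. mul h g) ` A) = emeasure M A)"

definition continuous_representation ::
  "('g::t2_space \<Rightarrow> 'g \<Rightarrow> 'g) \<Rightarrow> 'g \<Rightarrow> ('g \<Rightarrow> ('v::euclidean_space \<Rightarrow>\<^sub>L 'v)) \<Rightarrow> bool" where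
  "continuous_representation mul e rho \<longleftrightarrow>
     (\<forall>g h. rho (mul g h) = rho g o\<^sub>L rho h) \<and> rho e = id_blinfun \<and>
     continuous_on UNIV rho"

definition sup_norm :: "('g \<Rightarrow> real) \<Rightarrow> real" where
  "sup_norm f = (SUP g. \<bar>f g\<bar>)"

definition Lp_norm_even :: "'g measure \<Rightarrow> nat \<Rightarrow> ('g \<Rightarrow> real) \<Rightarrow> real" where
  "Lp_norm_even M k f = (integral\<^sup>L M (\<lambda>g. f g ^ (2*k))) powr (1 / real (2*k))"

end

theory Submission
  imports Defs
begin

locale rep_setup =
  fixes mul :: "'g::t2_space \<Rightarrow> 'g \<Rightarrow> 'g" and iv :: "'g \<Rightarrow> 'g" and e :: 'g
    and M :: "'g measure"
    and rho :: "'g \<Rightarrow> ('v::euclidean_space \<Rightarrow>\<^sub>L 'v)" and v :: 'v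
  assumes cg: "compact_group mul iv e" and hp: "haar_probability mul M"
    and cr: "continuous_representation mul e rho"
begin

lemma assoc: "mul (mul x y) z = mul x (mul y z)" and lid: "mul e x = x" and rid: "mul x e = x"
  and linv: "mul (iv x) x = e" and rinv: "mul x (iv x) = e"
  and cmul: "continuous_on UNIV (\<lambda>p. mul (fst p) (snd p))" and cpt: "compact (UNIV :: 'g set)"
  using cg unfolding compact_group_def by auto

lemma prob: "prob_space M" and setsM: "sets M = sets borel"
  and inv: "A \<in> sets borel \<Longrightarrow> emeasure M ((\<lambda>g. mul h g) ` A) = emeasure M A"
  using hp unfolding haar_probability_def by auto

lemma rho_mul: "rho (mul g h) = rho g o\<^sub>L rho h" and crho: "continuous_on UNIV rho"
  using cr unfolding continuous_representation_def by auto

interpretation P: prob_space M by (rule prob)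

lemma spaceM: "space M = UNIV"
  using sets_eq_imp_space_eq[OF setsM] by simp

lemma cont_mulh: "continuous_on UNIV (mul h)"
proof -
  have "continuous_on UNIV ((\<lambda>p. mul (fst p) (snd p)) \<circ> (\<lambda>g. (h, g)))"
    by (rule continuous_on_compose) (auto intro!: continuous_intros continuous_on_subset[OF cmul])
  thus ?thesis by (simp add: o_def)
qed

lemma meas: "continuous_on UNIV F \<Longrightarrow> F \<in> borel_measurable M"
  using borel_measurable_continuous_onI measurable_cong_sets[OF setsM refl] by blast

lemma meas_mulh: "mul h \<in> measurable M M"
  using borel_measurable_continuous_onI[OF cont_mulh] measurable_cong_sets[OF setsM setsM] by blast

lemma integ: fixes F :: "'g \<Rightarrow> real" assumes "continuous_on UNIV F" shows "integrable M F"
proof -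
  have "compact (F ` UNIV)" by (rule compact_continuous_image[OF assms cpt])
  then obtain B where "\<forall>x\<in>F ` UNIV. norm x \<le> B" using compact_imp_bounded bounded_iff by metis
  then show ?thesis
    by (intro P.integrable_const_bound[where B=B] meas assms) auto
qed

lemma distr_eq: "distr M M (mul h) = M"
proof (rule measure_eqI)
  fix A assume A: "A \<in> sets (distr M M (mul h))"
  then have A': "A \<in> sets borel" using setsM by simp
  have "mul h -` A = (mul (iv h)) ` A"
  proof (intro set_eqI iffI)
    fix x assume "x \<in> mul h -` A"
    then have "mul h x \<in> A" by simp
    moreover have "x = mul (iv h) (mul h x)" by (simp add: assoc[symmetric] linv lid)
    ultimately show "x \<in> mul (iv h) ` A" by blast
  next
    fix x assume "x \<in> mul (iv h) ` A"
    then obtain y where "y \<in> A" "x = mul (iv h) y" by blast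
    thus "x \<in> mul h -` A" by (simp add: assoc[symmetric] rinv lid)
  qed
  then show "emeasure (distr M M (mul h)) A = emeasure M A"
  proof -
    have "A \<in> sets M" using A by simp
    then have "emeasure (distr M M (mul h)) A = emeasure M (mul h -` A \<inter> space M)"
      using meas_mulh by (rule emeasure_distr[rotated])
    also have "\<dots> = emeasure M A" using \<open>mul h -` A = _\<close> inv[OF A'] by (simp add: spaceM)
    finally show ?thesis .
  qed
qed simp

lemma integral_inv: fixes F :: "'g \<Rightarrow> real" assumes "continuous_on UNIV F"
  shows "integral\<^sup>L M (\<lambda>g. F (mul h g)) = integral\<^sup>L M F"
  using integral_distr[OF meas_mulh meas[OF assms], of h] distr_eq by simp

lemma zero_everywhere:
  fixes z :: "'g \<Rightarrow> real"
  assumes cz: "continuous_on UNIV z" and i0: "integral\<^sup>L M (\<lambda>g. (z g)^2) = 0"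
  shows "z g1 = 0"
proof (rule ccontr)
  assume nz: "z g1 \<noteq> 0"
  define U where "U = z -` (- {0})"
  have oU: "open U" unfolding U_def by (rule open_vimage[OF _ cz]) auto
  have cz2: "continuous_on UNIV (\<lambda>g. (z g)^2)" by (intro continuous_intros cz)
  have "AE g in M. (z g)^2 = 0"
    using integral_nonneg_eq_0_iff_AE[OF integ[OF cz2]] i0 by simp
  then have "AE g in M. g \<notin> U" by (auto simp: U_def elim!: AE_mp)
  moreover have UM: "U \<in> sets M" using oU setsM by simp
  ultimately have Unull: "U \<in> null_sets M" using AE_iff_null_sets[OF UM] by simp
  have img: "mul h ` U = mul (iv h) -` U" for h
  proof (intro set_eqI iffI)
    fix x assume "x \<in> mul h ` U"
    then obtain y where "y \<in> U" "x = mul h y" by blast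
    thus "x \<in> mul (iv h) -` U" by (simp add: assoc[symmetric] linv lid)
  next
    fix x assume "x \<in> mul (iv h) -` U"
    moreover have "x = mul h (mul (iv h) x)" by (simp add: assoc[symmetric] rinv lid)
    ultimately show "x \<in> mul h ` U" by blast
  qed
  have openT: "open (mul h ` U)" for h
    unfolding img by (rule open_vimage[OF oU cont_mulh])
  have nullT: "mul h ` U \<in> null_sets M" for h
  proof -
    have "mul h ` U \<in> sets M" using openT[of h] setsM by simp
    moreover have "emeasure M (mul h ` U) = 0"
      using inv[of U h] UM setsM null_setsD1[OF Unull] by simp
    ultimately show ?thesis by (intro null_setsI)
  qed
  have cover: "(UNIV::'g set) \<subseteq> (\<Union>h\<in>UNIV. mul h ` U)"
  proof
    fix g :: 'g
    have eq: "g = mul (mul g (iv g1)) g1" by (simp add: assoc linv rid)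
    have "g1 \<in> U" using nz by (simp add: U_def)
    then have "g \<in> mul (mul g (iv g1)) ` U" by (subst eq) (rule imageI)
    then show "g \<in> (\<Union>h\<in>UNIV. mul h ` U)" by (rule UN_I[rotated]) simp
  qed
  obtain C' where C': "C' \<subseteq> UNIV" "finite C'" "(UNIV::'g set) \<subseteq> (\<Union>h\<in>C'. mul h ` U)"
    by (rule compactE_image[OF cpt openT cover])
  have N: "(\<Union>h\<in>C'. mul h ` U) \<in> null_sets M"
    by (rule null_sets_UN'[OF countable_finite[OF C'(2)]]) (rule nullT)
  have "space M \<in> null_sets M"
    by (rule null_sets_subset[OF N sets.top]) (use C'(3) spaceM in auto)
  then show False using P.emeasure_space_1 null_setsD1 by fastforce
qed

definition w :: "'g \<Rightarrow> 'v" where "w g = blinfun_apply (rho g) v"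
definition phi :: "'v \<Rightarrow> 'g \<Rightarrow> real" where "phi x g = x \<bullet> w g"
definition B :: "'v \<Rightarrow> 'v \<Rightarrow> real" where "B x y = integral\<^sup>L M (\<lambda>g. phi x g * phi y g)"

lemma cont_w: "continuous_on UNIV w"
  unfolding w_def by (intro continuous_intros crho)

lemma cont_phi: "continuous_on UNIV (phi x)"
  unfolding phi_def by (intro continuous_intros cont_w)

lemma integ_pp: "integrable M (\<lambda>g. phi x g * phi y g)"
  by (intro integ continuous_intros cont_phi)

lemma B_sym: "B x y = B y x" unfolding B_def by (simp add: mult.commute)

lemma B_diff_left: "B (x - y) t = B x t - B y t"
proof -
  have "B (x - y) t = integral\<^sup>L M (\<lambda>g. phi x g * phi t g - phi y g * phi t g)"
    by (simp add: B_def phi_def inner_diff_left left_diff_distrib)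
  also have "\<dots> = B x t - B y t"
    by (simp add: B_def Bochner_Integration.integral_diff[OF integ_pp integ_pp])
  finally show ?thesis .
qed

lemma B_add_left: "B (x + y) t = B x t + B y t"
proof -
  have "B (x + y) t = integral\<^sup>L M (\<lambda>g. phi x g * phi t g + phi y g * phi t g)"
    by (simp add: B_def phi_def inner_add_left distrib_right)
  also have "\<dots> = B x t + B y t"
    by (simp add: B_def Bochner_Integration.integral_add[OF integ_pp integ_pp])
  finally show ?thesis .
qed

lemma B_zero_left: "B 0 t = 0" by (simp add: B_def phi_def)

lemma B_scale_left: "B (c *\<^sub>R x) t = c * B x t"
  unfolding B_def by (simp add: phi_def mult.assoc)

lemma B_sum_left: "finite S \<Longrightarrow> B (\<Sum>s\<in>S. f s) t = (\<Sum>s\<in>S. B (f s) t)"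
  by (induction S rule: finite_induct) (simp_all add: B_add_left B_zero_left)

lemma B_nonneg: "0 \<le> B x x" unfolding B_def by (intro integral_nonneg_AE AE_I2) simp

lemma lin_rho: "linear (blinfun_apply (rho h))"
  by (rule bounded_linear.linear[OF blinfun.bounded_linear_right])

lemma phi_adj: "phi (adjoint (blinfun_apply (rho h)) u) g = phi u (mul h g)"
  unfolding phi_def w_def
proof -
  have "adjoint (blinfun_apply (rho h)) u \<bullet> rho g v = rho g v \<bullet> adjoint (blinfun_apply (rho h)) u"
    by (rule inner_commute)
  also have "\<dots> = rho h (rho g v) \<bullet> u" by (rule adjoint_works[OF lin_rho])
  also have "\<dots> = u \<bullet> rho (mul h g) v" by (simp add: rho_mul inner_commute)
  finally show "adjoint (blinfun_apply (rho h)) u \<bullet> rho g v = u \<bullet> rho (mul h g) v" .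
qed

lemma B_adj: "B (adjoint (blinfun_apply (rho h)) u) (adjoint (blinfun_apply (rho h)) u) = B u u"
  unfolding B_def phi_adj
  by (rule integral_inv[of "\<lambda>g. phi u g * phi u g"]) (intro continuous_intros cont_phi)

definition ON :: "'v set \<Rightarrow> bool" where
  "ON S \<longleftrightarrow> finite S \<and> (\<forall>s\<in>S. \<forall>t\<in>S. B s t = (if s = t then 1 else 0))"

lemma ON_indep: assumes ON: "ON S" shows "independent S"
proof
  assume "dependent S"
  then obtain a where a: "a \<in> S" "a \<in> span (S - {a})" unfolding dependent_def by blast
  have fin: "finite (S - {a})" using ON unfolding ON_def by blast
  have "a \<in> range (\<lambda>c. \<Sum>x\<in>S - {a}. c x *\<^sub>R x)" using a(2) unfolding span_finite[OF fin] .
  then obtain c where c: "a = (\<Sum>x\<in>S - {a}. c x *\<^sub>R x)" by blast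
  have Bxa: "B x a = 0" if "x \<in> S - {a}" for x using ON a(1) that unfolding ON_def by auto
  have "B a a = B (\<Sum>x\<in>S - {a}. c x *\<^sub>R x) a"
    by (rule arg_cong[of _ _ "\<lambda>y. B y a"]) (rule c)
  also have "\<dots> = (\<Sum>x\<in>S - {a}. c x * B x a)" by (simp add: B_sum_left[OF fin] B_scale_left)
  also have "\<dots> = 0" by (simp add: Bxa)
  finally have "B a a = 0" .
  moreover have "B a a = 1" using ON a(1) unfolding ON_def by auto
  ultimately show False by simp
qed

lemma ON_card: assumes "ON S" shows "card S \<le> DIM('v)"
proof -
  have "independent S" by (rule ON_indep[OF assms])
  then show ?thesis by (rule independent_bound[THEN conjunct2])
qed

lemma exists_max: "\<exists>S. ON S \<and> (\<forall>T. ON T \<longrightarrow> card T \<le> card S)"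
proof -
  have "ON {}" by (simp add: ON_def)
  moreover have "\<forall>T. ON T \<longrightarrow> card T < DIM('v) + 1" using ON_card by (simp add: less_Suc_eq_le)
  ultimately show ?thesis by (rule Lattices_Big.ex_has_greatest_nat)
qed

lemma decomp:
  assumes ON: "ON S" and mx: "\<forall>T. ON T \<longrightarrow> card T \<le> card S"
  shows "(phi u g)^2 \<le> B u u * (\<Sum>s\<in>S. (phi s g)^2)"
proof -
  have fin: "finite S" using ON unfolding ON_def by blast
  have on: "B s t = (if s = t then 1 else 0)" if "s \<in> S" "t \<in> S" for s t
    using ON that unfolding ON_def by blast
  define a where "a s = B u s" for s
  define z where "z = u - (\<Sum>s\<in>S. a s *\<^sub>R s)"
  have Bzt: "B z t = 0" if t: "t \<in> S" for t
  proof -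
    have "B z t = B u t - (\<Sum>s\<in>S. a s * B s t)"
      by (simp add: z_def B_diff_left B_sum_left[OF fin] B_scale_left)
    also have "(\<Sum>s\<in>S. a s * B s t) = (\<Sum>s\<in>S. if s = t then a s else 0)"
      by (rule sum.cong) (auto simp: on t)
    also have "\<dots> = a t" using fin t by simp
    finally show ?thesis by (simp add: a_def)
  qed
  have Bzz: "B z z = 0"
  proof (rule ccontr)
    assume "B z z \<noteq> 0"
    then have pos: "B z z > 0" using B_nonneg[of z] by simp
    define z' where "z' = (1 / sqrt (B z z)) *\<^sub>R z"
    have Bz't: "B z' t = 0" if "t \<in> S" for t by (simp add: z'_def B_scale_left Bzt that)
    have Btz': "B t z' = 0" if "t \<in> S" for t using Bz't[OF that] B_sym[of t z'] by simp
    have ss: "sqrt (B z z) * sqrt (B z z) = B z z" using pos by simp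
    have "B z' z' = (1 / sqrt (B z z)) * B z z'" by (simp add: z'_def B_scale_left)
    also have "B z z' = B z' z" by (rule B_sym)
    also have "B z' z = (1 / sqrt (B z z)) * B z z" by (simp add: z'_def B_scale_left)
    finally have Bz'z': "B z' z' = 1" using pos ss by (simp add: field_simps)
    have notin: "z' \<notin> S" using Bz't Bz'z' by force
    have "ON (insert z' S)"
      unfolding ON_def
    proof (intro conjI ballI)
      show "finite (insert z' S)" using fin by simp
    next
      fix s t assume "s \<in> insert z' S" "t \<in> insert z' S"
      then show "B s t = (if s = t then 1 else 0)"
        using Bz't Btz' Bz'z' on notin by auto
    qed
    then have "card (insert z' S) \<le> card S" using mx by blast
    then show False using fin notin by simp
  qed
  have phiz: "phi z g' = 0" for g'
  proof (rule zero_everywhere[OF cont_phi])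
    show "integral\<^sup>L M (\<lambda>g. (phi z g)^2) = 0" using Bzz by (simp add: B_def power2_eq_square)
  qed
  have "phi z g = phi u g - (\<Sum>s\<in>S. a s * phi s g)"
    by (simp add: z_def phi_def inner_diff_left inner_sum_left)
  then have phiu: "phi u g = (\<Sum>s\<in>S. a s * phi s g)" using phiz[of g] by simp
  have "B u u = B (z + (\<Sum>s\<in>S. a s *\<^sub>R s)) u" by (simp add: z_def)
  also have "\<dots> = B z u + (\<Sum>s\<in>S. a s * B s u)"
    by (simp add: B_add_left B_sum_left[OF fin] B_scale_left)
  also have "B z u = 0" by (simp add: B_def phiz)
  also have "(\<Sum>s\<in>S. a s * B s u) = (\<Sum>s\<in>S. (a s)^2)"
    by (rule sum.cong) (simp_all add: a_def power2_eq_square B_sym[of _ u])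
  finally have Buu: "B u u = (\<Sum>s\<in>S. (a s)^2)" by simp
  show ?thesis unfolding phiu Buu by (rule Cauchy_Schwarz_ineq_sum)
qed

lemma main_bound: "(phi u g0)^2 \<le> B u u * real DIM('v)"
proof -
  obtain S where ON: "ON S" and mx: "\<forall>T. ON T \<longrightarrow> card T \<le> card S"
    using exists_max by blast
  have fin: "finite S" using ON unfolding ON_def by blast
  define K where "K g = (\<Sum>s\<in>S. (phi s g)^2)" for g
  have pt: "(phi u g0)^2 \<le> B u u * K g" for g
  proof -
    define h where "h = mul g0 (iv g)"
    define u' where "u' = adjoint (blinfun_apply (rho h)) u"
    have "phi u' g = phi u (mul h g)" unfolding u'_def by (rule phi_adj)
    also have "mul h g = g0" by (simp add: h_def assoc linv rid)
    finally have "phi u g0 = phi u' g" by simp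
    moreover have "B u' u' = B u u" unfolding u'_def by (rule B_adj)
    ultimately show ?thesis using decomp[OF ON mx, of u' g] by (simp add: K_def)
  qed
  have cK: "continuous_on UNIV K" unfolding K_def by (intro continuous_intros cont_phi)
  have iK: "integral\<^sup>L M K = real (card S)"
  proof -
    have "integral\<^sup>L M K = (\<Sum>s\<in>S. integral\<^sup>L M (\<lambda>g. (phi s g)^2))"
      unfolding K_def
      by (rule Bochner_Integration.integral_sum) (intro integ continuous_intros cont_phi)
    also have "\<dots> = (\<Sum>s\<in>S. 1)"
    proof (rule sum.cong)
      fix s assume "s \<in> S"
      then have "B s s = 1" using ON unfolding ON_def by auto
      then show "integral\<^sup>L M (\<lambda>g. (phi s g)^2) = 1" by (simp add: B_def power2_eq_square)
    qed simp
    finally show ?thesis by simp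
  qed
  have "(phi u g0)^2 = integral\<^sup>L M (\<lambda>g. (phi u g0)^2)" by (simp add: P.prob_space)
  also have "\<dots> \<le> integral\<^sup>L M (\<lambda>g. B u u * K g)"
    by (rule integral_mono) (auto intro!: integ continuous_intros cK pt)
  also have "\<dots> = B u u * real (card S)" by (simp add: iK)
  also have "\<dots> \<le> B u u * real DIM('v)"
    using ON_card[OF ON] B_nonneg[of u] by (intro mult_left_mono) auto
  finally show ?thesis .
qed

lemma final:
  "sqrt (B u u) \<le> (SUP g. \<bar>phi u g\<bar>) \<and> (SUP g. \<bar>phi u g\<bar>) \<le> sqrt (real DIM('v)) * sqrt (B u u)"
proof -
  have bnd: "\<bar>phi u g\<bar> \<le> sqrt (real DIM('v)) * sqrt (B u u)" for g
  proof -
    have "\<bar>phi u g\<bar> = sqrt ((phi u g)^2)" by simp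
    also have "\<dots> \<le> sqrt (B u u * real DIM('v))" by (rule real_sqrt_le_mono[OF main_bound])
    also have "\<dots> = sqrt (real DIM('v)) * sqrt (B u u)" by (simp add: real_sqrt_mult)
    finally show ?thesis .
  qed
  have bdd: "bdd_above (range (\<lambda>g. \<bar>phi u g\<bar>))" using bnd by (intro bdd_aboveI2) 
  have up: "\<bar>phi u g\<bar> \<le> (SUP g. \<bar>phi u g\<bar>)" for g by (rule cSUP_upper[OF _ bdd]) simp
  have two: "(SUP g. \<bar>phi u g\<bar>) \<le> sqrt (real DIM('v)) * sqrt (B u u)"
    by (rule cSUP_least) (auto simp: bnd)
  define Sp where "Sp = (SUP g. \<bar>phi u g\<bar>)"
  have Sp0: "0 \<le> Sp" unfolding Sp_def using up[of e] by linarith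
  have sq: "(phi u g)^2 \<le> Sp^2" for g
  proof -
    have "(phi u g)^2 = \<bar>phi u g\<bar>^2" by simp
    also have "\<dots> \<le> Sp^2" using up[of g] unfolding Sp_def by (intro power_mono) auto
    finally show ?thesis .
  qed
  have "B u u = integral\<^sup>L M (\<lambda>g. (phi u g)^2)" by (simp add: B_def power2_eq_square)
  also have "\<dots> \<le> integral\<^sup>L M (\<lambda>g. Sp^2)"
    by (rule integral_mono) (auto intro!: integ continuous_intros cont_phi sq)
  also have "\<dots> = Sp^2" by (simp add: P.prob_space)
  finally have "sqrt (B u u) \<le> sqrt (Sp^2)" by (rule real_sqrt_le_mono)
  then have one: "sqrt (B u u) \<le> Sp" using Sp0 by simp
  show ?thesis using one two unfolding Sp_def by blast
qed

lemma B_eq: "integral\<^sup>L M (\<lambda>g. (phi u g)^2) = B u u" by (simp add: B_def power2_eq_square)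

end

theorem theorem1p2:
  fixes mul :: "'g::t2_space \<Rightarrow> 'g \<Rightarrow> 'g" and iv :: "'g \<Rightarrow> 'g" and e :: 'g
    and M :: "'g measure"
    and rho :: "'g \<Rightarrow> ('v::euclidean_space \<Rightarrow>\<^sub>L 'v)"
    and v :: 'v and l :: "'v \<Rightarrow> real" and f :: "'g \<Rightarrow> real"
  assumes "compact_group mul iv e"
    and "haar_probability mul M"
    and "continuous_representation mul e rho"
    and "linear l"
    and "\<And>g. f g = l (rho g v)"
  shows "Lp_norm_even M 1 f \<le> sup_norm f \<and>
         sup_norm f \<le> sqrt (real DIM('v)) * Lp_norm_even M 1 f"
proof -
  interpret R: rep_setup mul iv e M rho v
    by (rule rep_setup.intro) (rule assms)+
  define u0 where "u0 = (\<Sum>b\<in>Basis. l b *\<^sub>R b)"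
  have lrep: "l x = u0 \<bullet> x" for x
  proof -
    have "l x = l (\<Sum>b\<in>Basis. (x \<bullet> b) *\<^sub>R b)" by (simp add: euclidean_representation)
    also have "\<dots> = (\<Sum>b\<in>Basis. (x \<bullet> b) * l b)"
      using assms(4) by (simp add: linear_sum linear_scale)
    also have "\<dots> = (\<Sum>b\<in>Basis. l b * (b \<bullet> x))"
      by (rule sum.cong) (simp_all add: inner_commute[of x])
    also have "\<dots> = u0 \<bullet> x" by (simp add: u0_def inner_sum_left)
    finally show ?thesis .
  qed
  have fphi: "f = R.phi u0" by (rule ext) (simp add: assms(5) lrep R.phi_def R.w_def)
  have Lp: "Lp_norm_even M 1 f = sqrt (R.B u0 u0)"
  proof -
    have "Lp_norm_even M 1 f = (integral\<^sup>L M (\<lambda>g. (R.phi u0 g)^2)) powr (1/2)"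
      by (simp add: Lp_norm_even_def fphi)
    also have "\<dots> = sqrt (R.B u0 u0)" by (simp add: R.B_eq powr_half_sqrt R.B_nonneg)
    finally show ?thesis .
  qed
  have sn: "sup_norm f = (SUP g. \<bar>R.phi u0 g\<bar>)" by (simp add: sup_norm_def fphi)
  show ?thesis using R.final[of u0] unfolding Lp sn by simp
qed

end
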